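(* Let $c$ be the ellipse $x^2/a_c^2+y^2/b_c^2=1$, $a_c>b_c>0$, $e$ a confocal ellipse exterior to $c$ with semiaxes $(a_e,b_e)$, and $P_1\dots P_N$ an $N$-periodic billiard in $e$ with caustic $c$ with $N$ even, where $P_i=(a_e\cos t_i,b_e\sin t_i)$ and the contact point of side $P_iP_{i+1}$ with $c$ is $Q_i=(a_c\cos t_i',b_c\sin t_i')$. Put $\mathbf t_c(t)=(-a_c\sin t,\,b_c\cos t)$ and $k_h(t)=-\Vert\mathbf t_c(t)\Vert^2$. Then (indices mod $N$), for all $i$: \begin{itemize} \item if $N=4n$: $\Vert\mathbf t_c(t_i)\Vert\,\Vert\mathbf t_c(t_{i+n})\Vert=\sqrt{k_h(t_i)k_h(t_{i+n})}=a_cb_c$ and $\Vert\mathbf t_c(t_i')\Vert\,\Vert\mathbf t_c(t_{i+n}')\Vert=\sqrt{k_h(t_i')k_h(t_{i+n}')}=a_cb_c$; \item if $N=4n+2$: $\Vert\mathbf t_c(t_i)\Vert\,\Vert\mathbf t_c(t_{i+n}')\Vert=\sqrt{k_h(t_i)k_h(t_{i+n}')}=a_cb_c$ and $\Vert\mathbf t_c(t_i')\Vert\,\Vert\mathbf t_c(t_{i+n+1})\Vert=\sqrt{k_h(t_i')k_h(t_{i+n+1})}=a_cb_c$. \end{itemize}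
   Context: Confocal ellipses: $e$ has $a_e^2=a_c^2+k_e$, $b_e^2=b_c^2+k_e$ with $k_e>0$. A billiard in $e$ with caustic $c$ is a sequence of points $P_1,P_2,\dots$ on $e$ such that each line $P_iP_{i+1}$ is tangent to $c$ and $P_{i-1}P_i$, $P_iP_{i+1}$ are the two tangents from $P_i$ to $c$; it is traversed counterclockwise and is $N$-periodic if $P_{i+N}=P_i$. *)

theory Defs
  imports "HOL-Analysis.Analysis"
begin

definition tc :: "real \<Rightarrow> real \<Rightarrow> real \<Rightarrow> real \<times> real" where
  "tc ac bc t = (- ac * sin t, bc * cos t)"

definition kh :: "real \<Rightarrow> real \<Rightarrow> real \<Rightarrow> real" where
  "kh ac bc t = - ((norm (tc ac bc t))^2)"

text \<open>Vertex P_i = (a_e cos t_i, b_e sin t_i) on the confocal ellipse e.\<close>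
definition ptE :: "real \<Rightarrow> real \<Rightarrow> real \<Rightarrow> real \<Rightarrow> real \<times> real" where
  "ptE ac bc ke s = (sqrt (ac^2 + ke) * cos s, sqrt (bc^2 + ke) * sin s)"

definition on_tangent :: "real \<Rightarrow> real \<Rightarrow> real \<Rightarrow> real \<times> real \<Rightarrow> bool" where
  "on_tangent ac bc s p \<longleftrightarrow> fst p * cos s / ac + snd p * sin s / bc = 1"

text \<open>A billiard in e with caustic c, vertices given by parameters t i, contact point
  of side P_i P_(i+1) with c given by parameter t' i; traversed counterclockwise
  (c, hence the common centre, lies to the left of each directed side), and
  N-periodic with N its (minimal) period.\<close>
definition billiard :: "real \<Rightarrow> real \<Rightarrow> real \<Rightarrow> nat \<Rightarrow> (nat \<Rightarrow> real) \<Rightarrow> (nat \<Rightarrow> real) \<Rightarrow> bool" where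
  "billiard ac bc ke N t t' \<longleftrightarrow>
     (\<forall>i. ptE ac bc ke (t i) \<noteq> ptE ac bc ke (t (Suc i))
        \<and> on_tangent ac bc (t' i) (ptE ac bc ke (t i))
        \<and> on_tangent ac bc (t' i) (ptE ac bc ke (t (Suc i)))
        \<and> (cos (t' i), sin (t' i)) \<noteq> (cos (t' (Suc i)), sin (t' (Suc i)))
        \<and> fst (ptE ac bc ke (t i)) * snd (ptE ac bc ke (t (Suc i)))
          - snd (ptE ac bc ke (t i)) * fst (ptE ac bc ke (t (Suc i))) > 0)
   \<and> 0 < N
   \<and> (\<forall>i. ptE ac bc ke (t (i + N)) = ptE ac bc ke (t i))
   \<and> (\<forall>M. 0 < M \<and> M < N \<longrightarrow> (\<exists>i. ptE ac bc ke (t (i + M)) \<noteq> ptE ac bc ke (t i)))"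

end

theory Submission
  imports Defs
begin


lemma funpow_comm1:
  assumes "\<And>x. f (g x) = g (f x)"
  shows "(f ^^ n) (g x) = g ((f ^^ n) x)"
  by (induction n arbitrary: x) (simp_all add: assms)

lemma funpow_comm2:
  assumes "\<And>x. f (g x) = g (f x)"
  shows "(f ^^ n) ((g ^^ m) x) = (g ^^ m) ((f ^^ n) x)"
proof -
  have "\<And>y. (f ^^ n) (g y) = g ((f ^^ n) y)" using funpow_comm1[of f g n] assms by blast
  then show ?thesis using funpow_comm1[of g "f ^^ n" m x] by simp
qed

lemma strict_mono_funpow':
  fixes f :: "real \<Rightarrow> real"
  assumes "strict_mono f"
  shows "strict_mono (f ^^ n)"
  by (induction n) (auto simp: strict_mono_def assms[unfolded strict_mono_def])

lemma funpow_lt_lemma: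
  fixes G H :: "real \<Rightarrow> real"
  assumes G: "strict_mono G" and H: "strict_mono H"
    and comm: "\<And>x. G (H x) = H (G x)" and that: "G x < H x"
  shows "(G ^^ Suc j) x < (H ^^ Suc j) x"
proof -
  have commk: "\<And>j y. G ((H ^^ j) y) = (H ^^ j) (G y)"
    using funpow_comm1[of H G] comm by metis
  have Hj: "strict_mono (H ^^ j)" for j using strict_mono_funpow'[OF H] .
  show ?thesis
  proof (induction j)
    case 0 then show ?case using that by simp
  next
    case (Suc j)
    have "(G ^^ Suc (Suc j)) x = G ((G ^^ Suc j) x)" by simp
    also have "\<dots> < G ((H ^^ Suc j) x)" using Suc G by (simp add: strict_mono_less)
    also have "\<dots> = (H ^^ Suc j) (G x)" by (rule commk)
    also have "\<dots> < (H ^^ Suc j) (H x)" using that Hj[of "Suc j"] strict_mono_less by blast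
    also have "\<dots> = (H ^^ Suc (Suc j)) x" by (simp add: funpow_swap1)
    finally show ?case .
  qed
qed

lemma funpow_root_lemma:
  fixes G H :: "real \<Rightarrow> real"
  assumes G: "strict_mono G" and H: "strict_mono H"
    and comm: "\<And>x. G (H x) = H (G x)"
    and k: "k > 0" and eq: "(G ^^ k) x = (H ^^ k) x"
  shows "G x = H x"
proof -
  obtain j where kj: "k = Suc j" using k by (cases k) auto
  show ?thesis
  proof (rule ccontr)
    assume "G x \<noteq> H x"
    then consider "G x < H x" | "H x < G x" by linarith
    then show False
    proof cases
      case 1 then show False using funpow_lt_lemma[OF G H comm 1, of j] eq kj by simp
    next
      case 2 then show False using funpow_lt_lemma[OF H G comm[symmetric] 2, of j] eq kj by simp
    qed
  qed
qed

lemma cont_inj_strict_mono: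
  fixes f :: "real \<Rightarrow> real"
  assumes cont: "continuous_on UNIV f" and inj: "\<And>x y. f x = f y \<Longrightarrow> x = y"
    and up: "\<And>x. f x < f (x + 2 * pi)"
  shows "strict_mono f"
proof (rule strict_monoI)
  fix x y :: real assume xy: "x < y"
  have injon: "inj_on f S" for S using inj by (auto intro: inj_onI)
  show "f x < f y"
  proof (cases "y < x + 2 * pi")
    case True
    from continuous_inj_imp_mono[OF xy True continuous_on_subset[OF cont] injon]
    show ?thesis using up[of x] by auto
  next
    case False
    then have "x + 2*pi \<le> y" by simp
    then consider "x + 2*pi = y" | "x + 2*pi < y" by linarith
    then show ?thesis
    proof cases
      case 1 then show ?thesis using up[of x] by simp
    next
      case 2
      have "x < x + 2*pi" by simp
      from continuous_inj_imp_mono[OF this 2 continuous_on_subset[OF cont] injon]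
      show ?thesis using up[of x] by auto
    qed
  qed
qed

lemma same_angle_eq:
  fixes x y :: real
  assumes "cos x = cos y" "sin x = sin y" "\<bar>x - y\<bar> < 2 * pi"
  shows "x = y"
proof -
  have "cos (x - y) = 1" using assms by (simp add: cos_diff power2_eq_square[symmetric])
  then obtain n :: int where n: "x - y = n * 2 * pi" by (auto simp: cos_one_2pi_int)
  then have "\<bar>real_of_int n\<bar> * (2*pi) < 2 * pi" using assms(3) by (simp add: abs_mult)
  then have "\<bar>real_of_int n\<bar> < 1" by simp
  then have "n = 0" by linarith
  then show ?thesis using n by simp
qed



lemma angle_from_vec:
  fixes t p q :: real
  assumes pq: "p\<^sup>2 + q\<^sup>2 = 1" and w: "cos t * q - sin t * p > 0"
  shows "cos (t + arccos (cos t * p + sin t * q)) = p"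
    and "sin (t + arccos (cos t * p + sin t * q)) = q"
    and "0 < arccos (cos t * p + sin t * q)"
    and "arccos (cos t * p + sin t * q) < pi"
proof -
  define k where "k = cos t * p + sin t * q"
  define w where "w = cos t * q - sin t * p"
  have kw: "k\<^sup>2 + w\<^sup>2 = 1"
  proof -
    have "k\<^sup>2 + w\<^sup>2 = ((cos t)\<^sup>2 + (sin t)\<^sup>2) * (p\<^sup>2 + q\<^sup>2)"
      unfolding k_def w_def by algebra
    then show ?thesis using pq by simp
  qed
  have k1: "k\<^sup>2 \<le> 1" using kw zero_le_power2[of w] by linarith
  then have kb: "-1 \<le> k" "k \<le> 1" using abs_le_square_iff[of k 1] by auto
  have ck: "cos (arccos k) = k" using kb by simp
  have sk: "sin (arccos k) = w"
  proof -
    have "sin (arccos k) = sqrt (1 - k\<^sup>2)" using sin_arccos kb by blast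
    also have "1 - k\<^sup>2 = w\<^sup>2" using kw by simp
    also have "sqrt (w\<^sup>2) = w" using w w_def by simp
    finally show ?thesis .
  qed
  have "cos (t + arccos k) = cos t * k - sin t * w" using ck sk by (simp add: cos_add)
  also have "\<dots> = p * ((cos t)\<^sup>2 + (sin t)\<^sup>2)" unfolding k_def w_def by algebra
  also have "\<dots> = p" by simp
  finally show "cos (t + arccos (cos t * p + sin t * q)) = p" by (simp add: k_def)
  have "sin (t + arccos k) = sin t * k + cos t * w" using ck sk by (simp add: sin_add)
  also have "\<dots> = q * ((cos t)\<^sup>2 + (sin t)\<^sup>2)" unfolding k_def w_def by algebra
  also have "\<dots> = q" by simp
  finally show "sin (t + arccos (cos t * p + sin t * q)) = q" by (simp add: k_def)
  have a0: "0 \<le> arccos k" "arccos k \<le> pi" using arccos_lbound arccos_ubound kb by auto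
  have "arccos k \<noteq> 0" using sk w w_def by auto
  then show "0 < arccos (cos t * p + sin t * q)" using a0 k_def by simp
  have "arccos k \<noteq> pi" using sk w w_def by auto
  then show "arccos (cos t * p + sin t * q) < pi" using a0 k_def by simp
qed

lemma unit_sol_unique:
  fixes u1 u2 p q p' q' :: real
  assumes pq: "p\<^sup>2 + q\<^sup>2 = 1" and pq': "p'\<^sup>2 + q'\<^sup>2 = 1"
    and e: "u1 * p + u2 * q = 1" and e': "u1 * p' + u2 * q' = 1"
    and s: "(u1 * q - u2 * p) * (u1 * q' - u2 * p') > 0"
  shows "p = p' \<and> q = q'"
proof -
  define g where "g = u1 * q - u2 * p"
  define g' where "g' = u1 * q' - u2 * p'"
  have L: "(u1 * p + u2 * q)\<^sup>2 + g\<^sup>2 = (u1\<^sup>2 + u2\<^sup>2) * (p\<^sup>2 + q\<^sup>2)"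
    unfolding g_def by (simp add: power2_eq_square algebra_simps)
  have L': "(u1 * p' + u2 * q')\<^sup>2 + g'\<^sup>2 = (u1\<^sup>2 + u2\<^sup>2) * (p'\<^sup>2 + q'\<^sup>2)"
    unfolding g'_def by (simp add: power2_eq_square algebra_simps)
  have S: "u1\<^sup>2 + u2\<^sup>2 = 1 + g\<^sup>2" using L e pq by simp
  have S': "u1\<^sup>2 + u2\<^sup>2 = 1 + g'\<^sup>2" using L' e' pq' by simp
  have gg: "g * g' > 0" using s g_def g'_def by simp
  have "(g - g') * (g + g') = 0" using S S' by (simp add: power2_eq_square algebra_simps)
  moreover have "g + g' \<noteq> 0"
  proof
    assume "g + g' = 0" then have "g' = - g" by simp
    then show False using gg by (simp add: mult_less_0_iff)
  qed
  ultimately have geq: "g = g'" by simp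
  have Spos: "u1\<^sup>2 + u2\<^sup>2 \<noteq> 0" using S zero_le_power2[of g] by linarith
  have hp: "(u1\<^sup>2 + u2\<^sup>2) * p = u1 * (u1 * p + u2 * q) - u2 * g" unfolding g_def by (simp add: power2_eq_square algebra_simps)
  have hp': "(u1\<^sup>2 + u2\<^sup>2) * p' = u1 * (u1 * p' + u2 * q') - u2 * g'" unfolding g'_def by (simp add: power2_eq_square algebra_simps)
  have hq: "(u1\<^sup>2 + u2\<^sup>2) * q = u2 * (u1 * p + u2 * q) + u1 * g" unfolding g_def by (simp add: power2_eq_square algebra_simps)
  have hq': "(u1\<^sup>2 + u2\<^sup>2) * q' = u2 * (u1 * p' + u2 * q') + u1 * g'" unfolding g'_def by (simp add: power2_eq_square algebra_simps)
  have "(u1\<^sup>2 + u2\<^sup>2) * p = (u1\<^sup>2 + u2\<^sup>2) * p'" using hp hp' e e' geq by simp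
  then have "p = p'" using mult_left_cancel[OF Spos] by blast
  moreover have "(u1\<^sup>2 + u2\<^sup>2) * q = (u1\<^sup>2 + u2\<^sup>2) * q'" using hq hq' e e' geq by simp
  then have "q = q'" using mult_left_cancel[OF Spos] by blast
  ultimately show ?thesis by simp
qed

definition EE :: "real \<Rightarrow> real \<Rightarrow> real \<Rightarrow> real \<Rightarrow> real" where
  "EE al be x y = al * cos x * cos y + be * sin x * sin y"
definition FF :: "real \<Rightarrow> real \<Rightarrow> real \<Rightarrow> real \<Rightarrow> real" where
  "FF al be x y = al * cos x * sin y - be * sin x * cos y"

lemma EE_sym: "EE al be x y = EE al be y x"
  unfolding EE_def by (simp add: algebra_simps)

lemma abs_cc_ss: "\<bar>cos x * cos y\<bar> + \<bar>sin x * sin y\<bar> \<le> (1::real)"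
proof -
  define A where "A = \<bar>cos x\<bar>" define B where "B = \<bar>sin x\<bar>"
  define C where "C = \<bar>cos y\<bar>" define D where "D = \<bar>sin y\<bar>"
  have AB: "A\<^sup>2 + B\<^sup>2 = 1" unfolding A_def B_def by simp
  have CD: "C\<^sup>2 + D\<^sup>2 = 1" unfolding C_def D_def by simp
  have "(A * C + B * D)\<^sup>2 + (A * D - B * C)\<^sup>2 = (A\<^sup>2 + B\<^sup>2) * (C\<^sup>2 + D\<^sup>2)" by algebra
  then have "(A * C + B * D)\<^sup>2 + (A * D - B * C)\<^sup>2 = 1" using AB CD by simp
  then have "(A * C + B * D)\<^sup>2 \<le> 1" using zero_le_power2[of "A * D - B * C"] by linarith
  then have "A * C + B * D \<le> 1" using abs_le_square_iff[of "A * C + B * D" 1] by auto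
  then show ?thesis unfolding A_def B_def C_def D_def by (simp add: abs_mult)
qed

lemma EF_lagrange:
  "(EE al be x y)\<^sup>2 + (FF al be x y)\<^sup>2 = al\<^sup>2 * (cos x)\<^sup>2 + be\<^sup>2 * (sin x)\<^sup>2"
proof -
  have "(EE al be x y)\<^sup>2 + (FF al be x y)\<^sup>2 = (al\<^sup>2 * (cos x)\<^sup>2 + be\<^sup>2 * (sin x)\<^sup>2) * ((cos y)\<^sup>2 + (sin y)\<^sup>2)"
    unfolding EE_def FF_def by algebra
  then show ?thesis by simp
qed

lemma FF_swap:
  assumes al: "al > 1" and be: "be > 1" and e: "EE al be x y = 1"
  shows "FF al be x y * FF al be y x < 0"
proof -
  define cn1 where "cn1 = cos x" define sn1 where "sn1 = sin x"
  define cn2 where "cn2 = cos y" define sn2 where "sn2 = sin y"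
  have u1: "cn1\<^sup>2 + sn1\<^sup>2 = 1" and u2: "cn2\<^sup>2 + sn2\<^sup>2 = 1" by (simp_all add: cn1_def sn1_def cn2_def sn2_def)
  have ee: "al * cn1 * cn2 + be * sn1 * sn2 = 1" using e by (simp add: EE_def cn1_def sn1_def cn2_def sn2_def)
  have id0: "(al * cn1 * sn2 - be * sn1 * cn2) * (al * cn2 * sn1 - be * sn2 * cn1)
     = (al * cn1 * cn2 + be * sn1 * sn2) * (be * (cn1 * cn2) + al * (sn1 * sn2)) - al * be * ((cn1\<^sup>2 + sn1\<^sup>2) * (cn2\<^sup>2 + sn2\<^sup>2))"
    by algebra
  have id: "(al * cn1 * sn2 - be * sn1 * cn2) * (al * cn2 * sn1 - be * sn2 * cn1) = -(al * be - be * (cn1 * cn2) - al * (sn1 * sn2))"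
    using id0 u1 u2 ee by simp
  have b: "\<bar>cn1* cn2\<bar> + \<bar>sn1* sn2\<bar> \<le> 1" using abs_cc_ss[of x y] by (simp add: cn1_def sn1_def cn2_def sn2_def)
  have "be * (cn1* cn2) + al * (sn1* sn2) < al * be"
  proof -
    have "be * (cn1* cn2) \<le> be * \<bar>cn1* cn2\<bar>" using be by (simp add: mult_left_mono)
    moreover have "al * (sn1* sn2) \<le> al * \<bar>sn1* sn2\<bar>" using al by (simp add: mult_left_mono)
    moreover have "be * \<bar>cn1 * cn2\<bar> \<le> be * (1 - \<bar>sn1 * sn2\<bar>)"
      using b be by (intro mult_left_mono) auto
    moreover have "be * (1 - \<bar>sn1 * sn2\<bar>) + al * \<bar>sn1 * sn2\<bar> < al * be"
    proof -
      have y1: "\<bar>sn1 * sn2\<bar> \<le> 1" using b by linarith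
      have "be * (1 - \<bar>sn1 * sn2\<bar>) + al * \<bar>sn1 * sn2\<bar> = be + (al - be) * \<bar>sn1 * sn2\<bar>"
        by (simp add: algebra_simps)
      also have "\<dots> \<le> max al be"
      proof (cases "al \<le> be")
        case True
        then have "(al - be) * \<bar>sn1 * sn2\<bar> \<le> 0" by (simp add: mult_nonpos_nonneg)
        then show ?thesis by linarith
      next
        case False
        then have h: "(al - be) * \<bar>sn1 * sn2\<bar> \<le> (al - be) * 1" using y1 by (intro mult_left_mono) auto
        have m: "max al be = al" using False by simp
        have "be + (al - be) * \<bar>sn1 * sn2\<bar> \<le> al" using h by simp
        then show ?thesis using m by simp
      qed
      also have "max al be < al * be"
      proof -
        have "al * 1 < al * be" using al be by (intro mult_strict_left_mono) auto
        moreover have "1 * be < al * be" using al be by (intro mult_strict_right_mono) auto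
        ultimately show ?thesis by simp
      qed
      finally show ?thesis .
    qed
    ultimately show ?thesis by linarith
  qed
  then show ?thesis using id by (simp add: FF_def cn1_def sn1_def cn2_def sn2_def algebra_simps)
qed

lemma FF_nonzero:
  assumes al: "al > 1" and be: "be > 1" and e: "EE al be x y = 1"
  shows "FF al be x y \<noteq> 0"
  using FF_swap[OF assms] by auto

lemma fwd_unique:
  assumes e1: "EE al be x y1 = 1" and e2: "EE al be x y2 = 1"
    and f1: "FF al be x y1 > 0" and f2: "FF al be x y2 > 0"
  shows "cos y1 = cos y2 \<and> sin y1 = sin y2"
proof -
  have a: "(al * cos x) * cos y1 + (be * sin x) * sin y1 = 1" using e1 by (simp add: EE_def)
  have b: "(al * cos x) * cos y2 + (be * sin x) * sin y2 = 1" using e2 by (simp add: EE_def)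
  have c: "((al * cos x) * sin y1 - (be * sin x) * cos y1) * ((al * cos x) * sin y2 - (be * sin x) * cos y2) > 0"
    using f1 f2 by (simp add: FF_def)
  show ?thesis using unit_sol_unique[OF _ _ a b c] by simp
qed

lemma bwd_unique:
  assumes al: "al > 1" and be: "be > 1"
    and e1: "EE al be x1 y = 1" and e2: "EE al be x2 y = 1"
    and f1: "FF al be x1 y > 0" and f2: "FF al be x2 y > 0"
  shows "cos x1 = cos x2 \<and> sin x1 = sin x2"
proof -
  have g1: "FF al be y x1 < 0" using FF_swap[OF al be e1] f1 by (simp add: mult_less_0_iff)
  have g2: "FF al be y x2 < 0" using FF_swap[OF al be e2] f2 by (simp add: mult_less_0_iff)
  have "FF al be y x1 * FF al be y x2 > 0" using g1 g2 by (simp add: mult_neg_neg)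
  then show ?thesis
  proof -
    assume h: "FF al be y x1 * FF al be y x2 > 0"
    have a: "(al * cos y) * cos x1 + (be * sin y) * sin x1 = 1" using e1 by (simp add: EE_def algebra_simps)
    have b: "(al * cos y) * cos x2 + (be * sin y) * sin x2 = 1" using e2 by (simp add: EE_def algebra_simps)
    have c: "((al * cos y) * sin x1 - (be * sin y) * cos x1) * ((al * cos y) * sin x2 - (be * sin y) * cos x2) > 0"
      using h by (simp add: FF_def)
    show ?thesis using unit_sol_unique[OF _ _ a b c] by simp
  qed
qed



lemma dot_unit_bound:
  fixes t p q :: real
  assumes pq: "p\<^sup>2 + q\<^sup>2 = 1"
  shows "-1 \<le> cos t * p + sin t * q \<and> cos t * p + sin t * q \<le> 1"
proof -
  define k where "k = cos t * p + sin t * q"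
  define w where "w = cos t * q - sin t * p"
  have "k\<^sup>2 + w\<^sup>2 = ((cos t)\<^sup>2 + (sin t)\<^sup>2) * (p\<^sup>2 + q\<^sup>2)"
    unfolding k_def w_def by algebra
  then have "k\<^sup>2 + w\<^sup>2 = 1" using pq by simp
  then have "k\<^sup>2 \<le> 1" using zero_le_power2[of w] by linarith
  then show ?thesis using abs_le_square_iff[of k 1] k_def by auto
qed

definition RR :: "real \<Rightarrow> real \<Rightarrow> real \<Rightarrow> real" where
  "RR al be t = (al * cos t)\<^sup>2 + (be * sin t)\<^sup>2"
definition gA :: "real \<Rightarrow> real \<Rightarrow> real \<Rightarrow> real" where
  "gA al be t = sqrt (RR al be t - 1)"
definition pA :: "real \<Rightarrow> real \<Rightarrow> real \<Rightarrow> real" where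
  "pA al be t = (al * cos t - be * sin t * gA al be t) / RR al be t"
definition qA :: "real \<Rightarrow> real \<Rightarrow> real \<Rightarrow> real" where
  "qA al be t = (be * sin t + al * cos t * gA al be t) / RR al be t"
definition thA :: "real \<Rightarrow> real \<Rightarrow> real \<Rightarrow> real" where
  "thA al be t = arccos (cos t * pA al be t + sin t * qA al be t)"
definition Amap :: "real \<Rightarrow> real \<Rightarrow> real \<Rightarrow> real" where
  "Amap al be t = t + thA al be t"

context
  fixes al be :: real
  assumes al: "al > 1" and be: "be > 1"
begin

lemma RR_gt1: "RR al be t > 1"
proof -
  define m where "m = min (al\<^sup>2 - 1) (be\<^sup>2 - 1)"
  have al2: "al\<^sup>2 > 1" using one_less_power[OF al, of 2] by simp
  have be2: "be\<^sup>2 > 1" using one_less_power[OF be, of 2] by simp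
  have m0: "m > 0" unfolding m_def using al2 be2 by simp
  have "RR al be t - 1 = (al\<^sup>2 - 1) * (cos t)\<^sup>2 + (be\<^sup>2 - 1) * (sin t)\<^sup>2"
  proof -
    have "RR al be t - 1 = (al\<^sup>2 - 1) * (cos t)\<^sup>2 + (be\<^sup>2 - 1) * (sin t)\<^sup>2 + ((cos t)\<^sup>2 + (sin t)\<^sup>2) - 1"
      unfolding RR_def by (simp add: power_mult_distrib algebra_simps)
    then show ?thesis by simp
  qed
  also have "\<dots> \<ge> m * (cos t)\<^sup>2 + m * (sin t)\<^sup>2"
    by (intro add_mono mult_right_mono) (auto simp: m_def)
  also have "m * (cos t)\<^sup>2 + m * (sin t)\<^sup>2 = m" by (simp add: distrib_left[symmetric])
  finally show ?thesis using m0 by linarith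
qed

lemma gA_pos: "gA al be t > 0"
  unfolding gA_def using RR_gt1[of t] by simp

lemma gA_sq: "(gA al be t)\<^sup>2 = RR al be t - 1"
  unfolding gA_def using RR_gt1[of t] by simp

lemma pqA_unit: "(pA al be t)\<^sup>2 + (qA al be t)\<^sup>2 = 1"
proof -
  define u1 where "u1 = al * cos t" define u2 where "u2 = be * sin t"
  define g where "g = gA al be t" define R where "R = RR al be t"
  have R: "R = u1\<^sup>2 + u2\<^sup>2" unfolding R_def RR_def u1_def u2_def by simp
  have g2: "g\<^sup>2 = R - 1" using gA_sq g_def R_def by simp
  have R0: "R \<noteq> 0" using RR_gt1[of t] R_def by simp
  have pA': "pA al be t = (u1 - u2 * g) / R" unfolding pA_def u1_def u2_def g_def R_def by (simp add: mult.assoc)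
  have qA': "qA al be t = (u2 + u1 * g) / R" unfolding qA_def u1_def u2_def g_def R_def by (simp add: mult.assoc)
  have "(pA al be t)\<^sup>2 + (qA al be t)\<^sup>2 = ((u1 - u2 * g)\<^sup>2 + (u2 + u1 * g)\<^sup>2) / R\<^sup>2"
    unfolding pA' qA' by (simp only: power_divide add_divide_distrib[symmetric])
  also have "(u1 - u2 * g)\<^sup>2 + (u2 + u1 * g)\<^sup>2 = (u1\<^sup>2 + u2\<^sup>2) * (1 + g\<^sup>2)" by algebra
  also have "\<dots> = R\<^sup>2" using R g2 by (simp add: power2_eq_square)
  finally show ?thesis using R0 by simp
qed

lemma A_cross_pos: "cos t * qA al be t - sin t * pA al be t > 0"
proof -
  define c where "c = cos t" define s where "s = sin t"
  define g where "g = gA al be t" define R where "R = RR al be t"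
  define D where "D = al * c\<^sup>2 + be * s\<^sup>2"
  define C where "C = (be - al) * c * s"
  have cs: "c\<^sup>2 + s\<^sup>2 = 1" unfolding c_def s_def by simp
  have R: "R = (al * c)\<^sup>2 + (be * s)\<^sup>2" unfolding R_def RR_def c_def s_def by simp
  have R1: "R > 1" using RR_gt1 R_def by simp
  have g0: "g > 0" using gA_pos g_def by simp
  have g2: "g\<^sup>2 = R - 1" using gA_sq g_def R_def by simp
  have D1: "D > 1"
  proof -
    have "D - 1 = (al - 1) * c\<^sup>2 + (be - 1) * s\<^sup>2" unfolding D_def using cs by (simp add: algebra_simps)
    moreover have "(al - 1) * c\<^sup>2 + (be - 1) * s\<^sup>2 > 0"
    proof (cases "c = 0")
      case True then have "s\<^sup>2 = 1" using cs by simp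
      then show ?thesis using True be by simp
    next
      case False then have "c\<^sup>2 > 0" by simp
      then have "(al - 1) * c\<^sup>2 > 0" using al by simp
      moreover have "(be - 1) * s\<^sup>2 \<ge> 0" using be by simp
      ultimately show ?thesis by linarith
    qed
    ultimately show ?thesis by linarith
  qed
  have CD: "C\<^sup>2 + D\<^sup>2 = R"
  proof -
    have "C\<^sup>2 + D\<^sup>2 = ((al * c)\<^sup>2 + (be * s)\<^sup>2) * (c\<^sup>2 + s\<^sup>2)" unfolding C_def D_def by algebra
    then show ?thesis using cs R by simp
  qed
  have num: "g * D + C > 0"
  proof (cases "C \<ge> 0")
    case True
    have "g * D > 0" using g0 D1 by simp
    then show ?thesis using True by linarith
  next
    case False
    have "(g * D)\<^sup>2 = (R - 1) * D\<^sup>2" using g2 by (simp add: power_mult_distrib)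
    also have "\<dots> = C\<^sup>2 + (D\<^sup>2 - 1) * (C\<^sup>2 + D\<^sup>2)" using CD by (simp add: algebra_simps power2_eq_square)
    finally have e: "(g * D)\<^sup>2 = C\<^sup>2 + (D\<^sup>2 - 1) * (C\<^sup>2 + D\<^sup>2)" .
    have "D\<^sup>2 > 1" using one_less_power[OF D1, of 2] by simp
    moreover have "C\<^sup>2 + D\<^sup>2 > 0" using R1 CD by simp
    ultimately have "(D\<^sup>2 - 1) * (C\<^sup>2 + D\<^sup>2) > 0" by simp
    then have "(g * D)\<^sup>2 > C\<^sup>2" using e by linarith
    moreover have "g * D \<ge> 0" using g0 D1 by simp
    ultimately have "g * D > \<bar>C\<bar>" using power_less_imp_less_base[of "\<bar>C\<bar>" 2 "g * D"] by simp
    then show ?thesis by linarith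
  qed
  have pA': "pA al be t = (al * c - be * s * g) / R" unfolding pA_def c_def s_def g_def R_def by simp
  have qA': "qA al be t = (be * s + al * c * g) / R" unfolding qA_def c_def s_def g_def R_def by simp
  have "cos t * qA al be t - sin t * pA al be t = c * ((be * s + al * c * g) / R) - s * ((al * c - be * s * g) / R)"
    unfolding pA' qA' c_def s_def by simp
  also have "\<dots> = (c * (be * s + al * c * g) - s * (al * c - be * s * g)) / R"
    by (simp only: times_divide_eq_right diff_divide_distrib[symmetric])
  also have "c * (be * s + al * c * g) - s * (al * c - be * s * g) = g * D + C"
    unfolding D_def C_def by algebra
  finally have "cos t * qA al be t - sin t * pA al be t = (g * D + C) / R" .
  then show ?thesis using num R1 by simp
qed

lemma Amap_cos: "cos (Amap al be t) = pA al be t"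
  and Amap_sin: "sin (Amap al be t) = qA al be t"
  and thA_pos: "0 < thA al be t"
  and thA_lt: "thA al be t < pi"
  using angle_from_vec[OF pqA_unit A_cross_pos] unfolding Amap_def thA_def by auto

lemma EE_Amap: "EE al be t (Amap al be t) = 1"
proof -
  define u1 where "u1 = al * cos t" define u2 where "u2 = be * sin t"
  define g where "g = gA al be t" define R where "R = RR al be t"
  have R: "R = u1\<^sup>2 + u2\<^sup>2" unfolding R_def RR_def u1_def u2_def by simp
  have R0: "R \<noteq> 0" using RR_gt1[of t] R_def by simp
  have pA': "pA al be t = (u1 - u2 * g) / R" unfolding pA_def u1_def u2_def g_def R_def by (simp add: mult.assoc)
  have qA': "qA al be t = (u2 + u1 * g) / R" unfolding qA_def u1_def u2_def g_def R_def by (simp add: mult.assoc)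
  have "EE al be t (Amap al be t) = u1 * ((u1 - u2 * g) / R) + u2 * ((u2 + u1 * g) / R)"
    unfolding EE_def Amap_cos Amap_sin pA' qA' u1_def u2_def by (simp add: mult.assoc)
  also have "\<dots> = (u1 * (u1 - u2 * g) + u2 * (u2 + u1 * g)) / R"
    by (simp only: times_divide_eq_right add_divide_distrib[symmetric])
  also have "u1 * (u1 - u2 * g) + u2 * (u2 + u1 * g) = R" unfolding R by algebra
  finally show ?thesis using R0 by simp
qed

lemma FF_Amap: "FF al be t (Amap al be t) > 0"
proof -
  define u1 where "u1 = al * cos t" define u2 where "u2 = be * sin t"
  define g where "g = gA al be t" define R where "R = RR al be t"
  have R: "R = u1\<^sup>2 + u2\<^sup>2" unfolding R_def RR_def u1_def u2_def by simp
  have R0: "R > 0" using RR_gt1[of t] R_def by simp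
  have pA': "pA al be t = (u1 - u2 * g) / R" unfolding pA_def u1_def u2_def g_def R_def by (simp add: mult.assoc)
  have qA': "qA al be t = (u2 + u1 * g) / R" unfolding qA_def u1_def u2_def g_def R_def by (simp add: mult.assoc)
  have "FF al be t (Amap al be t) = u1 * ((u2 + u1 * g) / R) - u2 * ((u1 - u2 * g) / R)"
    unfolding FF_def Amap_cos Amap_sin pA' qA' u1_def u2_def by (simp add: mult.assoc)
  also have "\<dots> = (u1 * (u2 + u1 * g) - u2 * (u1 - u2 * g)) / R"
    by (simp only: times_divide_eq_right diff_divide_distrib[symmetric])
  also have "u1 * (u2 + u1 * g) - u2 * (u1 - u2 * g) = R * g" unfolding R by algebra
  finally show ?thesis using R0 gA_pos[of t] g_def by simp
qed

lemma thA_cong: "cos x = cos y \<Longrightarrow> sin x = sin y \<Longrightarrow> thA al be x = thA al be y"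
  unfolding thA_def pA_def qA_def gA_def RR_def by simp

lemma Amap_unique:
  assumes "EE al be t s = 1" "FF al be t s > 0"
  shows "cos s = cos (Amap al be t) \<and> sin s = sin (Amap al be t)"
  using fwd_unique[OF assms(1) EE_Amap assms(2) FF_Amap] .

lemma Amap_inj: "Amap al be x = Amap al be y \<Longrightarrow> x = y"
proof -
  assume h: "Amap al be x = Amap al be y"
  have "cos x = cos y \<and> sin x = sin y"
    using bwd_unique[OF al be EE_Amap[of x] _ FF_Amap[of x]] EE_Amap[of y] FF_Amap[of y] h by simp
  then have "thA al be x = thA al be y" using thA_cong by blast
  then show "x = y" using h unfolding Amap_def by simp
qed

lemma Amap_cont: "continuous_on UNIV (Amap al be)"
proof -
  have R0: "\<And>t. RR al be t \<noteq> 0" using RR_gt1 by (metis less_numeral_extra(4) not_one_less_zero order_less_trans)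
  have "continuous_on UNIV (\<lambda>t. t + arccos (cos t * pA al be t + sin t * qA al be t))"
    unfolding pA_def qA_def gA_def RR_def
    apply (intro continuous_intros)
    using R0 dot_unit_bound[OF pqA_unit] unfolding pA_def qA_def gA_def RR_def by auto
  then show ?thesis unfolding Amap_def thA_def by simp
qed

lemma Amap_2pi: "Amap al be (x + 2 * pi) = Amap al be x + 2 * pi"
proof -
  have "thA al be (x + 2 * pi) = thA al be x" by (rule thA_cong) simp_all
  then show ?thesis unfolding Amap_def by simp
qed

lemma Amap_mono: "strict_mono (Amap al be)"
proof (rule cont_inj_strict_mono[OF Amap_cont Amap_inj])
  fix x show "Amap al be x < Amap al be (x + 2 * pi)" using Amap_2pi by simp
qed

end



definition ff :: "real \<Rightarrow> real \<Rightarrow> real \<Rightarrow> real" where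
  "ff a b t = a\<^sup>2 * (sin t)\<^sup>2 + b\<^sup>2 * (cos t)\<^sup>2"
definition pP :: "real \<Rightarrow> real \<Rightarrow> real \<Rightarrow> real" where
  "pP a b t = - a * sin t / sqrt (ff a b t)"
definition qP :: "real \<Rightarrow> real \<Rightarrow> real \<Rightarrow> real" where
  "qP a b t = b * cos t / sqrt (ff a b t)"
definition thP :: "real \<Rightarrow> real \<Rightarrow> real \<Rightarrow> real" where
  "thP a b t = arccos (cos t * pP a b t + sin t * qP a b t)"
definition Pmap :: "real \<Rightarrow> real \<Rightarrow> real \<Rightarrow> real" where
  "Pmap a b t = t + thP a b t"

context
  fixes a b :: real
  assumes a: "a > 0" and b: "b > 0"
begin

lemma ff_pos: "ff a b t > 0"
proof (cases "sin t = 0")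
  case True then have "(cos t)\<^sup>2 = 1" using sin_cos_squared_add[of t] by simp
  then show ?thesis using True b unfolding ff_def by simp
next
  case False then have "a\<^sup>2 * (sin t)\<^sup>2 > 0" using a by simp
  moreover have "b\<^sup>2 * (cos t)\<^sup>2 \<ge> 0" by simp
  ultimately show ?thesis unfolding ff_def by linarith
qed

lemma sqrt_ff_pos: "sqrt (ff a b t) > 0" using ff_pos by simp

lemma pqP_unit: "(pP a b t)\<^sup>2 + (qP a b t)\<^sup>2 = 1"
proof -
  have f: "(sqrt (ff a b t))\<^sup>2 = ff a b t" using ff_pos[of t] by simp
  have "(pP a b t)\<^sup>2 + (qP a b t)\<^sup>2 = ((a * sin t)\<^sup>2 + (b * cos t)\<^sup>2) / (sqrt (ff a b t))\<^sup>2"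
    unfolding pP_def qP_def by (simp add: power_divide add_divide_distrib power_mult_distrib)
  also have "\<dots> = 1" unfolding f using ff_pos[of t] by (simp add: ff_def power_mult_distrib)
  finally show ?thesis .
qed

lemma P_cross_pos: "cos t * qP a b t - sin t * pP a b t > 0"
proof -
  have "cos t * qP a b t - sin t * pP a b t = (b * (cos t)\<^sup>2 + a * (sin t)\<^sup>2) / sqrt (ff a b t)"
    unfolding pP_def qP_def by (simp add: power2_eq_square add_divide_distrib diff_divide_distrib algebra_simps)
  moreover have "b * (cos t)\<^sup>2 + a * (sin t)\<^sup>2 > 0"
  proof (cases "sin t = 0")
    case True then have "(cos t)\<^sup>2 = 1" using sin_cos_squared_add[of t] by simp
    then show ?thesis using True b by simp
  next
    case False then have "a * (sin t)\<^sup>2 > 0" using a by simp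
    moreover have "b * (cos t)\<^sup>2 \<ge> 0" using b by simp
    ultimately show ?thesis by linarith
  qed
  ultimately show ?thesis using sqrt_ff_pos[of t] by simp
qed

lemma Pmap_cos: "cos (Pmap a b t) = pP a b t"
  and Pmap_sin: "sin (Pmap a b t) = qP a b t"
  and thP_pos: "0 < thP a b t"
  and thP_lt: "thP a b t < pi"
  using angle_from_vec[OF pqP_unit P_cross_pos] unfolding Pmap_def thP_def by auto

lemma thP_cong: "cos x = cos y \<Longrightarrow> sin x = sin y \<Longrightarrow> thP a b x = thP a b y"
  unfolding thP_def pP_def qP_def ff_def by simp

lemma Pmap_inj: "Pmap a b x = Pmap a b y \<Longrightarrow> x = y"
proof -
  assume h: "Pmap a b x = Pmap a b y"
  define sx where "sx = sqrt (ff a b x)" define sy where "sy = sqrt (ff a b y)"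
  have sx: "sx > 0" and sy: "sy > 0" using sqrt_ff_pos sx_def sy_def by auto
  have "pP a b x = pP a b y" "qP a b x = qP a b y" using h Pmap_cos Pmap_sin by metis+
  then have e1: "sin x / sx = sin y / sy" and e2: "cos x / sx = cos y / sy"
    unfolding pP_def qP_def sx_def sy_def using a b by (auto simp: divide_simps)
  define l where "l = sx / sy"
  have l0: "l > 0" unfolding l_def using sx sy by simp
  have s1: "sin x = l * sin y" using e1 sx sy unfolding l_def by (simp add: field_simps)
  have c1: "cos x = l * cos y" using e2 sx sy unfolding l_def by (simp add: field_simps)
  have h1: "(l * sin y)\<^sup>2 + (l * cos y)\<^sup>2 = 1" using sin_cos_squared_add[of x] s1 c1 by simp
  have h2: "(l * sin y)\<^sup>2 + (l * cos y)\<^sup>2 = l\<^sup>2 * ((sin y)\<^sup>2 + (cos y)\<^sup>2)" by algebra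
  have "l\<^sup>2 = 1" using h1 h2 by simp
  then have "l = 1" using l0 by (simp add: power2_eq_1_iff)
  then have "cos x = cos y" "sin x = sin y" using s1 c1 by auto
  then have "thP a b x = thP a b y" by (rule thP_cong)
  then show "x = y" using h unfolding Pmap_def by simp
qed

lemma Pmap_cont: "continuous_on UNIV (Pmap a b)"
proof -
  have S0: "\<And>t. sqrt (ff a b t) \<noteq> 0" using sqrt_ff_pos by (metis less_irrefl)
  have "continuous_on UNIV (\<lambda>t. t + arccos (cos t * pP a b t + sin t * qP a b t))"
    unfolding pP_def qP_def ff_def
    apply (intro continuous_intros)
    using S0 dot_unit_bound[OF pqP_unit] unfolding pP_def qP_def ff_def by auto
  then show ?thesis unfolding Pmap_def thP_def by simp
qed

lemma Pmap_2pi: "Pmap a b (x + 2 * pi) = Pmap a b x + 2 * pi"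
proof -
  have "thP a b (x + 2 * pi) = thP a b x" by (rule thP_cong) simp_all
  then show ?thesis unfolding Pmap_def by simp
qed

lemma Pmap_mono: "strict_mono (Pmap a b)"
proof (rule cont_inj_strict_mono[OF Pmap_cont Pmap_inj])
  fix x show "Pmap a b x < Pmap a b (x + 2 * pi)" using Pmap_2pi by simp
qed

lemma ff_Pmap: "ff a b (Pmap a b t) = a\<^sup>2 * b\<^sup>2 / ff a b t"
proof -
  have f: "(sqrt (ff a b t))\<^sup>2 = ff a b t" using ff_pos[of t] by simp
  define S where "S = sqrt (ff a b t)"
  have S0: "S \<noteq> 0" using sqrt_ff_pos[of t] S_def by simp
  have "ff a b (Pmap a b t) = a\<^sup>2 * (b * cos t / S)\<^sup>2 + b\<^sup>2 * (- a * sin t / S)\<^sup>2"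
    unfolding ff_def Pmap_cos Pmap_sin pP_def qP_def S_def by simp
  also have "\<dots> = (a\<^sup>2 * b\<^sup>2 * ((cos t)\<^sup>2 + (sin t)\<^sup>2)) / S\<^sup>2"
    using S0 by (simp add: field_simps power_divide power_mult_distrib del: sin_cos_squared_add2 sin_cos_squared_add)
  also have "\<dots> = a\<^sup>2 * b\<^sup>2 / ff a b t" unfolding S_def f by simp
  finally show ?thesis .
qed

lemma sqrt_ff_Pmap: "sqrt (ff a b (Pmap a b t)) = a * b / sqrt (ff a b t)"
  unfolding ff_Pmap using a b ff_pos[of t] by (simp add: real_sqrt_divide real_sqrt_mult)

lemma Pmap_Pmap: "Pmap a b (Pmap a b t) = t + pi"
proof -
  have S: "sqrt (ff a b t) > 0" using sqrt_ff_pos by simp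
  have c: "cos (Pmap a b (Pmap a b t)) = cos (t + pi)"
    unfolding Pmap_cos pP_def sqrt_ff_Pmap Pmap_sin qP_def using a b S by (simp add: field_simps)
  have s: "sin (Pmap a b (Pmap a b t)) = sin (t + pi)"
    unfolding Pmap_sin qP_def sqrt_ff_Pmap Pmap_cos pP_def using a b S by (simp add: field_simps)
  have "Pmap a b (Pmap a b t) - t = thP a b t + thP a b (Pmap a b t)" unfolding Pmap_def by simp
  then have "\<bar>Pmap a b (Pmap a b t) - (t + pi)\<bar> < 2 * pi"
    using thP_pos[of t] thP_lt[of t] thP_pos[of "Pmap a b t"] thP_lt[of "Pmap a b t"] by linarith
  then show ?thesis using same_angle_eq[OF c s] by simp
qed

end



lemma Q_sq_identity:
  fixes a b al be c1 s1 c2 s2 :: real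
  assumes u1: "c1\<^sup>2 + s1\<^sup>2 = 1" and u2: "c2\<^sup>2 + s2\<^sup>2 = 1"
    and rel: "(al * a)\<^sup>2 - a\<^sup>2 = (be * b)\<^sup>2 - b\<^sup>2"
    and e: "al * c1 * c2 + be * s1 * s2 = 1"
  shows "(al * a\<^sup>2 * s1 * s2 + be * b\<^sup>2 * c1 * c2)\<^sup>2 = (a\<^sup>2 * s1\<^sup>2 + b\<^sup>2 * c1\<^sup>2) * (a\<^sup>2 * s2\<^sup>2 + b\<^sup>2 * c2\<^sup>2)"
proof -
  define X where "X = c1 * c2" define Y where "Y = s1 * s2"
  have i1: "(al * a\<^sup>2 * s1 * s2 + be * b\<^sup>2 * c1 * c2)\<^sup>2 - a\<^sup>2 * b\<^sup>2 * (al * X + be * Y)\<^sup>2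
        = (a\<^sup>2 * Y\<^sup>2 - b\<^sup>2 * X\<^sup>2) * ((al * a)\<^sup>2 - (be * b)\<^sup>2)"
    unfolding X_def Y_def by algebra
  have i2: "(a\<^sup>2 * s1\<^sup>2 + b\<^sup>2 * c1\<^sup>2) * (a\<^sup>2 * s2\<^sup>2 + b\<^sup>2 * c2\<^sup>2)
        = a\<^sup>2 * b\<^sup>2 * ((c1\<^sup>2 + s1\<^sup>2) * (c2\<^sup>2 + s2\<^sup>2)) + (a\<^sup>2 * Y\<^sup>2 - b\<^sup>2 * X\<^sup>2) * (a\<^sup>2 - b\<^sup>2)"
    unfolding X_def Y_def by algebra
  have r: "(al * a)\<^sup>2 - (be * b)\<^sup>2 = a\<^sup>2 - b\<^sup>2" using rel by simp
  have e': "al * X + be * Y = 1" using e unfolding X_def Y_def by (simp add: mult.assoc)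
  show ?thesis using i1 i2 r e' u1 u2 by simp
qed

context
  fixes a b al be :: real
  assumes a: "a > 0" and b: "b > 0" and ab: "a > b"
    and al: "al > 1" and be: "be > 1"
    and rel: "(al * a)\<^sup>2 - a\<^sup>2 = (be * b)\<^sup>2 - b\<^sup>2"
begin

lemma Pmap_EE:
  assumes e: "EE al be t s = 1"
  shows "EE al be (Pmap a b t) (Pmap a b s) = 1"
proof -
  define c1 where "c1 = cos t" define s1 where "s1 = sin t"
  define c2 where "c2 = cos s" define s2 where "s2 = sin s"
  define S1 where "S1 = sqrt (ff a b t)" define S2 where "S2 = sqrt (ff a b s)"
  define Q where "Q = al * a\<^sup>2 * s1 * s2 + be * b\<^sup>2 * c1 * c2"
  have S1: "S1 > 0" and S2: "S2 > 0" using sqrt_ff_pos[OF a b] S1_def S2_def by auto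
  have u1: "c1\<^sup>2 + s1\<^sup>2 = 1" and u2: "c2\<^sup>2 + s2\<^sup>2 = 1" by (simp_all add: c1_def s1_def c2_def s2_def)
  have ee: "al * c1 * c2 + be * s1 * s2 = 1" using e by (simp add: EE_def c1_def s1_def c2_def s2_def)
  have Qsq: "Q\<^sup>2 = ff a b t * ff a b s"
    unfolding Q_def ff_def c1_def s1_def c2_def s2_def
    using Q_sq_identity[OF u1 u2 rel ee] unfolding c1_def s1_def c2_def s2_def by simp
  have Qpos: "Q > 0"
  proof -
    have "be * Q = al * be * a\<^sup>2 * (s1 * s2) + (be * b)\<^sup>2 * (c1 * c2)"
      unfolding Q_def by (simp add: power2_eq_square algebra_simps)
    also have "be * (s1 * s2) = 1 - al * (c1 * c2)" using ee by (simp add: algebra_simps)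
    then have "al * be * a\<^sup>2 * (s1 * s2) = al * a\<^sup>2 * (1 - al * (c1 * c2))"
      by (metis mult.assoc mult.commute)
    also have "(be * b)\<^sup>2 = (al * a)\<^sup>2 - a\<^sup>2 + b\<^sup>2" using rel by simp
    finally have "be * Q = al * a\<^sup>2 - (a\<^sup>2 - b\<^sup>2) * (c1 * c2)"
      by (simp add: power2_eq_square algebra_simps)
    moreover have "c1 * c2 \<le> 1" using abs_cc_ss[of t s] unfolding c1_def c2_def
      by (smt (verit) abs_ge_self abs_not_less_zero)
    moreover have "a\<^sup>2 - b\<^sup>2 > 0" using a b ab by (simp add: power_strict_mono)
    ultimately have "be * Q \<ge> al * a\<^sup>2 - (a\<^sup>2 - b\<^sup>2)"
      by (smt (verit) mult_left_mono mult_cancel_left1)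
    moreover have "al * a\<^sup>2 > a\<^sup>2" using al a by simp
    moreover have "b\<^sup>2 > 0" using b by simp
    ultimately have "be * Q > 0" by linarith
    then show ?thesis using be by (simp add: zero_less_mult_iff)
  qed
  have QS: "Q = S1 * S2"
  proof -
    have "Q = sqrt (Q\<^sup>2)" using Qpos by simp
    also have "\<dots> = S1 * S2" unfolding Qsq S1_def S2_def by (simp add: real_sqrt_mult)
    finally show ?thesis .
  qed
  have "EE al be (Pmap a b t) (Pmap a b s) = Q / (S1 * S2)"
    unfolding EE_def Pmap_cos[OF a b] Pmap_sin[OF a b] pP_def qP_def Q_def S1_def S2_def c1_def s1_def c2_def s2_def
    using sqrt_ff_pos[OF a b, of t] sqrt_ff_pos[OF a b, of s]
    by (simp add: power2_eq_square add_divide_distrib mult_ac)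
  then show ?thesis using QS S1 S2 by simp
qed

lemma Pmap_FF:
  assumes e: "EE al be t s = 1" and f: "FF al be t s > 0"
  shows "FF al be (Pmap a b t) (Pmap a b s) > 0"
proof -
  define S1 where "S1 = sqrt (ff a b t)" define S2 where "S2 = sqrt (ff a b s)"
  have S1: "S1 > 0" and S2: "S2 > 0" using sqrt_ff_pos[OF a b] S1_def S2_def by auto
  have neg: "FF al be s t < 0" using FF_swap[OF al be e] f by (simp add: mult_less_0_iff)
  have "FF al be (Pmap a b t) (Pmap a b s) = - (a * b * FF al be s t) / (S1 * S2)"
    unfolding FF_def Pmap_cos[OF a b] Pmap_sin[OF a b] pP_def qP_def S1_def S2_def
    using sqrt_ff_pos[OF a b, of t] sqrt_ff_pos[OF a b, of s]
    by (simp add: add_divide_distrib diff_divide_distrib algebra_simps)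
  moreover have "a * b * FF al be s t < 0" using neg a b by (simp add: mult_pos_neg)
  moreover have "S1 * S2 > 0" using S1 S2 by simp
  ultimately show ?thesis using divide_neg_pos[of "a * b * FF al be s t" "S1 * S2"] by simp
qed

lemma Pmap_Amap: "Pmap a b (Amap al be t) = Amap al be (Pmap a b t)"
proof -
  have e: "EE al be (Pmap a b t) (Pmap a b (Amap al be t)) = 1"
    using Pmap_EE[OF EE_Amap[OF al be]] .
  have f: "FF al be (Pmap a b t) (Pmap a b (Amap al be t)) > 0"
    using Pmap_FF[OF EE_Amap[OF al be] FF_Amap[OF al be]] .
  from Amap_unique[OF al be e f]
  have cs: "cos (Pmap a b (Amap al be t)) = cos (Amap al be (Pmap a b t))"
           "sin (Pmap a b (Amap al be t)) = sin (Amap al be (Pmap a b t))" by auto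
  have "Pmap a b (Amap al be t) - t = thA al be t + thP a b (Amap al be t)"
    unfolding Pmap_def Amap_def by simp
  moreover have "Amap al be (Pmap a b t) - t = thP a b t + thA al be (Pmap a b t)"
    unfolding Pmap_def Amap_def by simp
  ultimately have "\<bar>Pmap a b (Amap al be t) - Amap al be (Pmap a b t)\<bar> < 2 * pi"
    using thA_pos[OF al be, of t] thA_lt[OF al be, of t] thP_pos[OF a b, of "Amap al be t"] thP_lt[OF a b, of "Amap al be t"]
      thP_pos[OF a b, of t] thP_lt[OF a b, of t] thA_pos[OF al be, of "Pmap a b t"] thA_lt[OF al be, of "Pmap a b t"]
    by linarith
  then show ?thesis using same_angle_eq[OF cs] by simp
qed

end



lemma chain_cross:
  fixes al be x s u :: real
  assumes al: "al > 1" and be: "be > 1"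
    and e1: "EE al be x s = 1" and e2: "EE al be s u = 1"
    and f1: "FF al be x s > 0" and f2: "FF al be s u > 0"
  shows "cos x * sin u - sin x * cos u > 0"
proof -
  have e2': "EE al be u s = 1" using e2 EE_sym by metis
  have f2': "FF al be u s < 0" using FF_swap[OF al be e2] f2 by (simp add: mult_less_0_iff)
  define cx where "cx = cos x" define sx where "sx = sin x"
  define cs where "cs = cos s" define ss where "ss = sin s"
  define cu where "cu = cos u" define su where "su = sin u"
  have n: "cs\<^sup>2 + ss\<^sup>2 = 1" unfolding cs_def ss_def by simp
  have h1: "al * cx * cs + be * sx * ss = 1" using e1 unfolding EE_def cx_def sx_def cs_def ss_def by simp
  have h2: "al * cu * cs + be * su * ss = 1" using e2' unfolding EE_def cu_def su_def cs_def ss_def by simp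
  have d1: "cs * (al * cx - cs) + ss * (be * sx - ss) = 0" using h1 n by (simp add: power2_eq_square algebra_simps)
  have d2: "cs * (al * cu - cs) + ss * (be * su - ss) = 0" using h2 n by (simp add: power2_eq_square algebra_simps)
  have col: "(al * cx - cs) * (be * su - ss) - (be * sx - ss) * (al * cu - cs) = 0"
  proof -
    define p1 where "p1 = al * cx - cs" define q1 where "q1 = be * sx - ss"
    define p2 where "p2 = al * cu - cs" define q2 where "q2 = be * su - ss"
    have "cs * p1 + ss * q1 = 0" "cs * p2 + ss * q2 = 0" using d1 d2 p1_def q1_def p2_def q2_def by auto
    then have "(p1 * q2 - q1 * p2) * (cs\<^sup>2 + ss\<^sup>2) = 0" by algebra
    then show ?thesis using n p1_def q1_def p2_def q2_def by simp
  qed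
  have "al * be * (cx * su - sx * cu) = FF al be x s - FF al be u s
        + ((al * cx - cs) * (be * su - ss) - (be * sx - ss) * (al * cu - cs))"
    unfolding FF_def cx_def sx_def cs_def ss_def cu_def su_def by algebra
  then have "al * be * (cx * su - sx * cu) > 0" using col f1 f2' by simp
  moreover have "al * be > 0" using al be by simp
  ultimately show ?thesis unfolding cx_def sx_def cu_def su_def by (simp add: zero_less_mult_iff)
qed



lemma Amap_shift:
  assumes al: "al > 1" and be: "be > 1"
  shows "Amap al be (y + 2 * real m * pi) = Amap al be y + 2 * real m * pi"
proof -
  have "thA al be (y + 2 * real m * pi) = thA al be y"
    by (rule thA_cong[OF al be]) (simp_all add: cos_add sin_add)
  then show ?thesis unfolding Amap_def by simp
qed

lemma Amap_pow_shift:
  assumes al: "al > 1" and be: "be > 1"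
  shows "(Amap al be ^^ j) (y + 2 * real m * pi) = (Amap al be ^^ j) y + 2 * real m * pi"
  by (induction j) (simp_all add: Amap_shift[OF al be])

lemma Amap_same:
  assumes al: "al > 1" and be: "be > 1" and c: "cos x = cos y" and s: "sin x = sin y"
  shows "cos (Amap al be x) = cos (Amap al be y) \<and> sin (Amap al be x) = sin (Amap al be y)"
proof -
  have "thA al be x = thA al be y" using thA_cong[OF al be c s] .
  then show ?thesis unfolding Amap_def using c s by (simp add: cos_add sin_add)
qed

lemma Amap_gt: "al > 1 \<Longrightarrow> be > 1 \<Longrightarrow> Amap al be y > y"
  using thA_pos unfolding Amap_def by fastforce

lemma Amap_pow_gt: "al > 1 \<Longrightarrow> be > 1 \<Longrightarrow> (Amap al be ^^ Suc j) y > y"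
proof (induction j)
  case 0 then show ?case using Amap_gt by simp
next
  case (Suc j)
  then have "(Amap al be ^^ Suc j) y > y" by simp
  moreover have "Amap al be ((Amap al be ^^ Suc j) y) > (Amap al be ^^ Suc j) y" using Amap_gt Suc.prems by blast
  ultimately show ?case by simp
qed

lemma Pmap_pow_even: "a > 0 \<Longrightarrow> b > 0 \<Longrightarrow> (Pmap a b ^^ (2 * j)) y = y + real j * pi"
proof (induction j arbitrary: y)
  case 0 then show ?case by simp
next
  case (Suc j)
  have "(Pmap a b ^^ (2 * Suc j)) y = (Pmap a b ^^ (2 * j)) (Pmap a b (Pmap a b y))"
    by (simp add: funpow_swap1)
  also have "\<dots> = y + pi + real j * pi" using Suc Pmap_Pmap by simp
  finally show ?case by (simp add: algebra_simps)
qed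

lemma ff_shift_pi: "ff a b (y + real j * pi) = ff a b y"
proof -
  have h: "((-1::real)^j)\<^sup>2 = 1" by (cases "even j") simp_all
  show ?thesis unfolding ff_def by (simp add: sin_add cos_add power_mult_distrib h)
qed

lemma same_angle_2pi:
  assumes "cos x = cos y" "sin x = sin y"
  shows "\<exists>n::int. x = y + 2 * real_of_int n * pi"
proof -
  have "cos (x - y) = 1" using assms by (simp add: cos_diff power2_eq_square[symmetric])
  then obtain n :: int where "x - y = n * 2 * pi" by (auto simp: cos_one_2pi_int)
  then show ?thesis by (intro exI[of _ n]) (simp add: algebra_simps)
qed

lemma core:
  fixes ac bc ke :: real and N :: nat and t t' :: "nat \<Rightarrow> real"
  assumes abc: "ac > bc" and bc: "bc > 0" and ke: "ke > 0"
    and B: "billiard ac bc ke N t t'"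
    and ev: "even N"
  shows "\<exists>W L. N = 2 * L \<and> (\<forall>i. cos (t i) = cos (W (2 * i)) \<and> sin (t i) = sin (W (2 * i))
              \<and> cos (t' i) = cos (W (2 * i + 1)) \<and> sin (t' i) = sin (W (2 * i + 1)))
         \<and> (\<forall>k. ff ac bc (W (k + L)) * ff ac bc (W k) = ac\<^sup>2 * bc\<^sup>2)"
proof -
  have ac: "ac > 0" using abc bc by simp
  define ae where "ae = sqrt (ac\<^sup>2 + ke)"
  define bE where "bE = sqrt (bc\<^sup>2 + ke)"
  define al where "al = ae / ac"
  define be where "be = bE / bc"
  have ae_gt: "ae > ac"
  proof -
    have "sqrt (ac\<^sup>2) < sqrt (ac\<^sup>2 + ke)" using ke by (simp only: real_sqrt_less_iff)
    then show ?thesis using ac unfolding ae_def by simp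
  qed
  have bE_gt: "bE > bc"
  proof -
    have "sqrt (bc\<^sup>2) < sqrt (bc\<^sup>2 + ke)" using ke by (simp only: real_sqrt_less_iff)
    then show ?thesis using bc unfolding bE_def by simp
  qed
  have ae0: "ae > 0" and bE0: "bE > 0" using ae_gt bE_gt ac bc by auto
  have al: "al > 1" unfolding al_def using ae_gt ac by simp
  have be: "be > 1" unfolding be_def using bE_gt bc by simp
  have alac: "al * ac = ae" unfolding al_def using ac by simp
  have bebc: "be * bc = bE" unfolding be_def using bc by simp
  have rel: "(al * ac)\<^sup>2 - ac\<^sup>2 = (be * bc)\<^sup>2 - bc\<^sup>2"
    unfolding alac bebc ae_def bE_def using ke by simp
  have EEeq: "EE al be x y = ae * cos x * cos y / ac + bE * sin x * sin y / bc" for x y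
    unfolding EE_def al_def be_def by simp
  have ptE_eq: "ptE ac bc ke x = ptE ac bc ke y \<longleftrightarrow> cos x = cos y \<and> sin x = sin y" for x y
    unfolding ptE_def using ae0 bE0 by (simp add: ae_def[symmetric] bE_def[symmetric])
  have crossEq: "fst (ptE ac bc ke x) * snd (ptE ac bc ke y) - snd (ptE ac bc ke x) * fst (ptE ac bc ke y)
      = ae * bE * (cos x * sin y - sin x * cos y)" for x y
    unfolding ptE_def ae_def bE_def by (simp add: algebra_simps)
  from B have Bi: "\<And>i. ptE ac bc ke (t i) \<noteq> ptE ac bc ke (t (Suc i))
        \<and> on_tangent ac bc (t' i) (ptE ac bc ke (t i))
        \<and> on_tangent ac bc (t' i) (ptE ac bc ke (t (Suc i)))
        \<and> (cos (t' i), sin (t' i)) \<noteq> (cos (t' (Suc i)), sin (t' (Suc i)))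
        \<and> fst (ptE ac bc ke (t i)) * snd (ptE ac bc ke (t (Suc i)))
          - snd (ptE ac bc ke (t i)) * fst (ptE ac bc ke (t (Suc i))) > 0"
    and N0: "0 < N"
    and per: "\<And>i. ptE ac bc ke (t (i + N)) = ptE ac bc ke (t i)"
    and minp: "\<And>M. 0 < M \<Longrightarrow> M < N \<Longrightarrow> \<exists>i. ptE ac bc ke (t (i + M)) \<noteq> ptE ac bc ke (t i)"
    unfolding billiard_def by auto
  have tan_EE: "on_tangent ac bc s (ptE ac bc ke x) \<Longrightarrow> EE al be x s = 1" for s x
    unfolding on_tangent_def ptE_def EEeq ae_def[symmetric] bE_def[symmetric] by (simp add: algebra_simps)
  have E1: "EE al be (t i) (t' i) = 1" for i using Bi[of i] tan_EE by blast
  have E2: "EE al be (t' i) (t (Suc i)) = 1" for i using Bi[of i] tan_EE EE_sym by metis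
  have D1: "\<not> (cos (t i) = cos (t (Suc i)) \<and> sin (t i) = sin (t (Suc i)))" for i
    using Bi[of i] ptE_eq by blast
  have D2: "\<not> (cos (t' i) = cos (t' (Suc i)) \<and> sin (t' i) = sin (t' (Suc i)))" for i
    using Bi[of i] by auto
  have C0: "cos (t 0) * sin (t 1) - sin (t 0) * cos (t 1) > 0"
  proof -
    have "ae * bE * (cos (t 0) * sin (t 1) - sin (t 0) * cos (t 1)) > 0"
      using Bi[of 0] crossEq[of "t 0" "t 1"] by simp
    moreover have "ae * bE > 0" using ae0 bE0 by simp
    ultimately show ?thesis by (simp add: zero_less_mult_iff)
  qed
  define w where "w k = (if even k then t (k div 2) else t' (k div 2))" for k
  have wE: "EE al be (w k) (w (Suc k)) = 1" for k
  proof (cases "even k")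
    case True then show ?thesis unfolding w_def using E1[of "k div 2"] by simp
  next
    case False
    then have "Suc k div 2 = Suc (k div 2)" by presburger
    then show ?thesis unfolding w_def using E2[of "k div 2"] False by simp
  qed
  have wD: "\<not> (cos (w k) = cos (w (Suc (Suc k))) \<and> sin (w k) = sin (w (Suc (Suc k))))" for k
  proof (cases "even k")
    case True
    then have "Suc (Suc k) div 2 = Suc (k div 2)" by presburger
    then show ?thesis unfolding w_def using D1[of "k div 2"] True by simp
  next
    case False
    then have "Suc (Suc k) div 2 = Suc (k div 2)" by presburger
    then show ?thesis unfolding w_def using D2[of "k div 2"] False by simp
  qed
  have wF0: "FF al be (w k) (w (Suc k)) \<noteq> 0" for k using FF_nonzero[OF al be wE] .
  have step: "FF al be (w k) (w (Suc k)) > 0 \<longleftrightarrow> FF al be (w (Suc k)) (w (Suc (Suc k))) > 0" for k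
  proof
    assume h: "FF al be (w k) (w (Suc k)) > 0"
    show "FF al be (w (Suc k)) (w (Suc (Suc k))) > 0"
    proof (rule ccontr)
      assume "\<not> ?thesis"
      then have n: "FF al be (w (Suc k)) (w (Suc (Suc k))) < 0" using wF0[of "Suc k"] by linarith
      have p: "FF al be (w (Suc (Suc k))) (w (Suc k)) > 0"
        using FF_swap[OF al be wE[of "Suc k"]] n by (simp add: mult_less_0_iff)
      have e: "EE al be (w (Suc (Suc k))) (w (Suc k)) = 1" using wE[of "Suc k"] EE_sym by metis
      show False using bwd_unique[OF al be wE[of k] e h p] wD[of k] by simp
    qed
  next
    assume h: "FF al be (w (Suc k)) (w (Suc (Suc k))) > 0"
    show "FF al be (w k) (w (Suc k)) > 0"
    proof (rule ccontr)
      assume "\<not> ?thesis"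
      then have n: "FF al be (w k) (w (Suc k)) < 0" using wF0[of k] by linarith
      have p: "FF al be (w (Suc k)) (w k) > 0"
        using FF_swap[OF al be wE[of k]] n by (simp add: mult_less_0_iff)
      have e: "EE al be (w (Suc k)) (w k) = 1" using wE[of k] EE_sym by metis
      show False using fwd_unique[OF e wE[of "Suc k"] p h] wD[of k] by simp
    qed
  qed
  have allsame: "FF al be (w k) (w (Suc k)) > 0 \<longleftrightarrow> FF al be (w 0) (w 1) > 0" for k
    by (induction k) (use step in auto)
  have fwd0: "FF al be (w 0) (w 1) > 0"
  proof (rule ccontr)
    assume "\<not> ?thesis"
    then have n0: "FF al be (w 0) (w 1) < 0" using wF0[of 0] by simp
    have n1: "FF al be (w 1) (w 2) < 0" using allsame[of 1] wF0[of 1] n0 by (simp add: numeral_2_eq_2)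
    have p0: "FF al be (w 1) (w 0) > 0" using FF_swap[OF al be wE[of 0]] n0 by (simp add: mult_less_0_iff)
    have p1: "FF al be (w 2) (w 1) > 0" using FF_swap[OF al be wE[of 1]] n1 by (simp add: mult_less_0_iff numeral_2_eq_2)
    have e0: "EE al be (w 1) (w 0) = 1" using wE[of 0] EE_sym by (metis One_nat_def)
    have e1: "EE al be (w 2) (w 1) = 1" using wE[of 1] EE_sym by (metis One_nat_def Suc_1)
    have "cos (w 2) * sin (w 0) - sin (w 2) * cos (w 0) > 0" using chain_cross[OF al be e1 e0 p1 p0] .
    then have "cos (t 1) * sin (t 0) - sin (t 1) * cos (t 0) > 0" unfolding w_def by simp
    then show False using C0 by (simp add: algebra_simps)
  qed
  have fwd: "FF al be (w k) (w (Suc k)) > 0" for k using allsame fwd0 by blast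
  define A where "A = Amap al be"
  define x0 where "x0 = w 0"
  define W where "W k = (A ^^ k) x0" for k
  have wW: "cos (w k) = cos (W k) \<and> sin (w k) = sin (W k)" for k
  proof (induction k)
    case 0 then show ?case unfolding W_def x0_def by simp
  next
    case (Suc k)
    have "cos (w (Suc k)) = cos (A (w k)) \<and> sin (w (Suc k)) = sin (A (w k))"
      using Amap_unique[OF al be wE fwd] unfolding A_def by blast
    moreover have "cos (A (w k)) = cos (A (W k)) \<and> sin (A (w k)) = sin (A (W k))"
      using Amap_same[OF al be] Suc unfolding A_def by blast
    moreover have "A (W k) = W (Suc k)" unfolding W_def by simp
    ultimately show ?case by simp
  qed
  have Amono: "strict_mono A" unfolding A_def using Amap_mono[OF al be] .
  have "cos (t N) = cos (t 0) \<and> sin (t N) = sin (t 0)" using per[of 0] ptE_eq by simp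
  then have "cos (W (2 * N)) = cos x0 \<and> sin (W (2 * N)) = sin x0"
    using wW[of "2 * N"] unfolding w_def x0_def by simp
  then obtain mi :: int where mi: "W (2 * N) = x0 + 2 * real_of_int mi * pi"
    using same_angle_2pi by blast
  have "W (2 * N) > x0"
  proof -
    obtain j where "2 * N = Suc j" using N0 by (cases "2 * N") auto
    then show ?thesis unfolding W_def A_def using Amap_pow_gt[OF al be] by metis
  qed
  then have h2: "real_of_int mi * (2 * pi) > 0" using mi by (simp add: algebra_simps)
  have "real_of_int mi > 0"
  proof (rule ccontr)
    assume "\<not> real_of_int mi > 0"
    then have "real_of_int mi * (2 * pi) \<le> 0" by (intro mult_nonpos_nonneg) auto
    then show False using h2 by simp
  qed
  then obtain m :: nat where m: "mi = int m" and m0: "m > 0" by (metis of_int_0_less_iff pos_int_cases)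
  have WN: "(A ^^ (2 * N)) x0 = x0 + 2 * real m * pi" using mi m unfolding W_def by simp
  obtain L where NL: "N = 2 * L" using ev by blast
  have L0: "L > 0" using N0 NL by simp
  have modd: "odd m"
  proof
    assume "even m"
    then obtain m2 where m2: "m = 2 * m2" by blast
    define H where "H y = y + 2 * real m2 * pi" for y
    have Hm: "strict_mono H" unfolding H_def by (rule strict_monoI) simp
    have GH: "(A ^^ N) (H y) = H ((A ^^ N) y)" for y
      unfolding H_def A_def using Amap_pow_shift[OF al be] by simp
    have Hpow: "(H ^^ j) y = y + real j * (2 * real m2 * pi)" for j y
      by (induction j) (simp_all add: H_def algebra_simps)
    have "((A ^^ N) ^^ 2) x0 = (H ^^ 2) x0"
      using WN m2 Hpow[of 2 x0] by (simp add: funpow_mult mult.commute algebra_simps)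
    from funpow_root_lemma[OF strict_mono_funpow'[OF Amono] Hm GH _ this]
    have AN: "(A ^^ N) x0 = x0 + 2 * real m2 * pi" unfolding H_def by simp
    have "ptE ac bc ke (t (i + L)) = ptE ac bc ke (t i)" for i
    proof -
      have ii: "2 * (i + L) = 2 * i + N" using NL by simp
      have "W (2 * (i + L)) = (A ^^ (2 * i)) ((A ^^ N) x0)" unfolding W_def ii
        by (simp only: funpow_add o_apply)
      also have "\<dots> = (A ^^ (2 * i)) (x0 + 2 * real m2 * pi)" using AN by simp
      also have "\<dots> = W (2 * i) + 2 * real m2 * pi" unfolding W_def A_def by (rule Amap_pow_shift[OF al be])
      finally have "cos (W (2 * (i + L))) = cos (W (2 * i)) \<and> sin (W (2 * (i + L))) = sin (W (2 * i))"
        by (simp add: cos_add sin_add)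
      then have "cos (t (i + L)) = cos (t i) \<and> sin (t (i + L)) = sin (t i)"
        using wW[of "2 * (i + L)"] wW[of "2 * i"] unfolding w_def by simp
      then show ?thesis using ptE_eq by blast
    qed
    moreover have "L < N" using NL L0 by simp
    ultimately show False using minp[OF L0] by blast
  qed
  then obtain j where mj: "m = 2 * j + 1" using oddE by blast
  (* quarter map *)
  have a0: "ac > 0" and b0: "bc > 0" using ac bc by auto
  define P where "P = Pmap ac bc"
  have Pmono: "strict_mono P" unfolding P_def using Pmap_mono[OF a0 b0] .
  have PA: "P (A y) = A (P y)" for y unfolding P_def A_def using Pmap_Amap[OF a0 b0 abc al be rel] .
  have comm: "(A ^^ L) ((P ^^ m) y) = (P ^^ m) ((A ^^ L) y)" for y
    using funpow_comm2[of A P L m y] PA by metis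
  have eq4: "((A ^^ L) ^^ 4) x0 = ((P ^^ m) ^^ 4) x0"
  proof -
    have "((A ^^ L) ^^ 4) x0 = (A ^^ (2 * N)) x0" by (simp add: funpow_mult NL algebra_simps)
    also have "\<dots> = x0 + 2 * real m * pi" using WN .
    also have "\<dots> = (P ^^ (2 * (2 * m))) x0" unfolding P_def using Pmap_pow_even[OF a0 b0, of "2 * m" x0] by simp
    also have "\<dots> = ((P ^^ m) ^^ 4) x0" by (simp add: funpow_mult algebra_simps)
    finally show ?thesis .
  qed
  have AL: "(A ^^ L) x0 = (P ^^ m) x0"
    using funpow_root_lemma[OF strict_mono_funpow'[OF Amono] strict_mono_funpow'[OF Pmono] comm _ eq4] by simp
  have WkL: "W (k + L) = P (W k) + real j * pi" for k
  proof -
    have "W (k + L) = (A ^^ k) ((A ^^ L) x0)" unfolding W_def by (simp add: funpow_add)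
    also have "\<dots> = (A ^^ k) ((P ^^ m) x0)" using AL by simp
    also have "\<dots> = (P ^^ m) (W k)" unfolding W_def using funpow_comm2[of A P k m x0] PA by metis
    also have "\<dots> = (P ^^ (2 * j)) (P (W k))" unfolding mj by (simp add: funpow_swap1)
    also have "\<dots> = P (W k) + real j * pi" unfolding P_def using Pmap_pow_even[OF a0 b0] by simp
    finally show ?thesis .
  qed
  have fin: "ff ac bc (W (k + L)) * ff ac bc (W k) = ac\<^sup>2 * bc\<^sup>2" for k
  proof -
    have "ff ac bc (W (k + L)) = ff ac bc (P (W k))" unfolding WkL by (rule ff_shift_pi)
    also have "\<dots> = ac\<^sup>2 * bc\<^sup>2 / ff ac bc (W k)" unfolding P_def using ff_Pmap[OF a0 b0] .
    finally show ?thesis using ff_pos[OF a0 b0, of "W k"] by simp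
  qed
  have tw: "cos (t i) = cos (W (2 * i)) \<and> sin (t i) = sin (W (2 * i))
              \<and> cos (t' i) = cos (W (2 * i + 1)) \<and> sin (t' i) = sin (W (2 * i + 1))" for i
    using wW[of "2 * i"] wW[of "2 * i + 1"] unfolding w_def by simp
  show ?thesis using NL tw fin by blast
qed



lemma tc_kh_lemma:
  fixes ac bc x y :: real
  assumes ac: "ac > 0" and bc: "bc > 0" and h: "ff ac bc x * ff ac bc y = ac\<^sup>2 * bc\<^sup>2"
  shows "norm (tc ac bc x) * norm (tc ac bc y) = sqrt (kh ac bc x * kh ac bc y)
       \<and> sqrt (kh ac bc x * kh ac bc y) = ac * bc"
proof -
  have normtc: "norm (tc ac bc z) = sqrt (ff ac bc z)" for z
    unfolding tc_def norm_Pair ff_def by (simp add: power_mult_distrib)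
  have khf: "kh ac bc z = - ff ac bc z" for z
    unfolding kh_def normtc using ff_pos[OF ac bc, of z] by simp
  have "kh ac bc x * kh ac bc y = ff ac bc x * ff ac bc y" unfolding khf by simp
  moreover have "sqrt (ff ac bc x * ff ac bc y) = norm (tc ac bc x) * norm (tc ac bc y)"
    unfolding normtc by (simp add: real_sqrt_mult)
  moreover have "sqrt (ac\<^sup>2 * bc\<^sup>2) = ac * bc" using ac bc by (simp add: real_sqrt_mult)
  ultimately show ?thesis using h by simp
qed

theorem lemma2:
  fixes ac bc ke :: real and N n :: nat and t t' :: "nat \<Rightarrow> real"
  assumes "ac > bc" and "bc > 0" and "ke > 0"
    and "billiard ac bc ke N t t'"
    and "even N"
  shows "(N = 4 * n \<longrightarrow> (\<forall>i.
            norm (tc ac bc (t i)) * norm (tc ac bc (t (i + n)))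
              = sqrt (kh ac bc (t i) * kh ac bc (t (i + n)))
          \<and> sqrt (kh ac bc (t i) * kh ac bc (t (i + n))) = ac * bc
          \<and> norm (tc ac bc (t' i)) * norm (tc ac bc (t' (i + n)))
              = sqrt (kh ac bc (t' i) * kh ac bc (t' (i + n)))
          \<and> sqrt (kh ac bc (t' i) * kh ac bc (t' (i + n))) = ac * bc))
       \<and> (N = 4 * n + 2 \<longrightarrow> (\<forall>i.
            norm (tc ac bc (t i)) * norm (tc ac bc (t' (i + n)))
              = sqrt (kh ac bc (t i) * kh ac bc (t' (i + n)))
          \<and> sqrt (kh ac bc (t i) * kh ac bc (t' (i + n))) = ac * bc
          \<and> norm (tc ac bc (t' i)) * norm (tc ac bc (t (i + n + 1)))
              = sqrt (kh ac bc (t' i) * kh ac bc (t (i + n + 1)))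
          \<and> sqrt (kh ac bc (t' i) * kh ac bc (t (i + n + 1))) = ac * bc))"
proof -
  have ac: "ac > 0" and bc: "bc > 0" using assms(1,2) by auto
  obtain W L where NL: "N = 2 * L"
    and tw: "\<And>i. cos (t i) = cos (W (2 * i)) \<and> sin (t i) = sin (W (2 * i))
              \<and> cos (t' i) = cos (W (2 * i + 1)) \<and> sin (t' i) = sin (W (2 * i + 1))"
    and fin: "\<And>k. ff ac bc (W (k + L)) * ff ac bc (W k) = ac\<^sup>2 * bc\<^sup>2"
    using core[OF assms] by blast
  have fcong: "cos x = cos y \<Longrightarrow> sin x = sin y \<Longrightarrow> ff ac bc x = ff ac bc y" for x y
    unfolding ff_def by simp
  have ft: "ff ac bc (t i) = ff ac bc (W (2 * i))" for i using tw[of i] fcong by blast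
  have ft': "ff ac bc (t' i) = ff ac bc (W (2 * i + 1))" for i using tw[of i] fcong by blast
  have K: "ff ac bc (W k) * ff ac bc (W (k + L)) = ac\<^sup>2 * bc\<^sup>2" for k using fin[of k] by (simp add: mult.commute)
  show ?thesis
  proof (intro conjI impI allI)
    fix i assume "N = 4 * n"
    then have L: "L = 2 * n" using NL by simp
    have "ff ac bc (t i) * ff ac bc (t (i + n)) = ac\<^sup>2 * bc\<^sup>2"
      using K[of "2 * i"] unfolding ft L by (simp add: algebra_simps)
    note r = tc_kh_lemma[OF ac bc this]
    have "ff ac bc (t' i) * ff ac bc (t' (i + n)) = ac\<^sup>2 * bc\<^sup>2"
      using K[of "2 * i + 1"] unfolding ft' L by (simp add: algebra_simps)
    note r' = tc_kh_lemma[OF ac bc this]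
    show "norm (tc ac bc (t i)) * norm (tc ac bc (t (i + n))) = sqrt (kh ac bc (t i) * kh ac bc (t (i + n)))"
      using r by blast
    show "sqrt (kh ac bc (t i) * kh ac bc (t (i + n))) = ac * bc" using r by blast
    show "norm (tc ac bc (t' i)) * norm (tc ac bc (t' (i + n))) = sqrt (kh ac bc (t' i) * kh ac bc (t' (i + n)))"
      using r' by blast
    show "sqrt (kh ac bc (t' i) * kh ac bc (t' (i + n))) = ac * bc" using r' by blast
  next
    fix i assume "N = 4 * n + 2"
    then have L: "L = 2 * n + 1" using NL by simp
    have "ff ac bc (t i) * ff ac bc (t' (i + n)) = ac\<^sup>2 * bc\<^sup>2"
      using K[of "2 * i"] unfolding ft ft' L by (simp add: algebra_simps)
    note r = tc_kh_lemma[OF ac bc this]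
    have "ff ac bc (t' i) * ff ac bc (t (i + n + 1)) = ac\<^sup>2 * bc\<^sup>2"
      using K[of "2 * i + 1"] unfolding ft ft' L by (simp add: algebra_simps)
    note r' = tc_kh_lemma[OF ac bc this]
    show "norm (tc ac bc (t i)) * norm (tc ac bc (t' (i + n))) = sqrt (kh ac bc (t i) * kh ac bc (t' (i + n)))"
      using r by blast
    show "sqrt (kh ac bc (t i) * kh ac bc (t' (i + n))) = ac * bc" using r by blast
    show "norm (tc ac bc (t' i)) * norm (tc ac bc (t (i + n + 1))) = sqrt (kh ac bc (t' i) * kh ac bc (t (i + n + 1)))"
      using r' by blast
    show "sqrt (kh ac bc (t' i) * kh ac bc (t (i + n + 1))) = ac * bc" using r' by blast
  qed
qed


end
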